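(* Let $\beta$ be any partition, with conjugate $\beta' = (\beta'_1,\beta'_2,\dots)$, and let $k \geq \beta'_1$ (that is, $k$ is at least the number of parts of $\beta$). Let $\lambda = (k, \beta'_1, \beta'_2, \dots)$, a partition of $k+|\beta|$. Then $$s_\beta(1,q,\dots,q^{k-1}) = q^{-\binom{|\beta|+1}{2}} f_{\lambda,|\beta|}(q),$$ i.e. the principal specialization $s_\beta(1,q,\dots,q^{k-1})$ is, up to a power of $q$, the distribution of the major index over all standard Young tableaux of shape $\lambda$ having the maximum possible number $|\beta|$ of descents.
   Context: For a partition $\lambda\vdash N$, a standard Young tableau of shape $\lambda$ is a filling of the Ferrers diagram with $1,\dots,N$, increasing along rows and down columns; it has a descent at $m$ if $m+1$ lies in a strictly lower row than $m$; $\mathrm{des}$ is the number of descents and $\mathrm{maj}$ their sum. $f_{\lambda,i}(q)=\sum q^{\mathrm{maj}(\tau)}$ over standard Young tableaux of shape $\lambda$ with $\mathrm{des}(\tau)=i$. The conjugate $\beta'$ has $\beta'_c$ equal to the number of parts of $\beta$ that are $\ge c$. $s_\beta(x_1,\dots,x_m)$ is the Schur polynomial, the sum of $x^T$ over semistandard Young tableaux $T$ of shape $\beta$ with entries in $\{1,\dots,m\}$. *)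

theory Defs
  imports Main
begin

text \<open>Partitions are lists of positive naturals in weakly decreasing order.
  Cells of the Ferrers diagram are 0-indexed pairs (row, column).\<close>

definition is_partition :: "nat list \<Rightarrow> bool" where
  "is_partition \<beta> \<longleftrightarrow> sorted_wrt (\<ge>) \<beta> \<and> (\<forall>p\<in>set \<beta>. 0 < p)"

definition psize :: "nat list \<Rightarrow> nat" where
  "psize \<beta> = sum_list \<beta>"

definition conjugate :: "nat list \<Rightarrow> nat list" where
  "conjugate \<beta> = map (\<lambda>c. length (filter (\<lambda>p. c \<le> p) \<beta>)) [1..<Suc (Max (insert 0 (set \<beta>)))]"

definition cells :: "nat list \<Rightarrow> (nat \<times> nat) set" where
  "cells sh = {(i, j). i < length sh \<and> j < sh ! i}"

definition SYT :: "nat list \<Rightarrow> (nat \<times> nat \<Rightarrow> nat) set" where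
  "SYT sh = {T. bij_betw T (cells sh) {1..sum_list sh}
     \<and> (\<forall>i j. (i, j + 1) \<in> cells sh \<longrightarrow> T (i, j) < T (i, j + 1))
     \<and> (\<forall>i j. (i + 1, j) \<in> cells sh \<longrightarrow> T (i, j) < T (i + 1, j))
     \<and> (\<forall>c. c \<notin> cells sh \<longrightarrow> T c = 0)}"

definition descents :: "nat list \<Rightarrow> (nat \<times> nat \<Rightarrow> nat) \<Rightarrow> nat set" where
  "descents sh T = {m. 1 \<le> m \<and> m < sum_list sh \<and>
     (\<exists>i j i' j'. (i, j) \<in> cells sh \<and> T (i, j) = m \<and> (i', j') \<in> cells sh \<and> T (i', j') = m + 1 \<and> i < i')}"

definition des :: "nat list \<Rightarrow> (nat \<times> nat \<Rightarrow> nat) \<Rightarrow> nat" where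
  "des sh T = card (descents sh T)"

definition maj :: "nat list \<Rightarrow> (nat \<times> nat \<Rightarrow> nat) \<Rightarrow> nat" where
  "maj sh T = \<Sum>(descents sh T)"

definition f_des :: "nat list \<Rightarrow> nat \<Rightarrow> 'a::comm_ring_1 \<Rightarrow> 'a" where
  "f_des sh d q = (\<Sum>T\<in>{T\<in>SYT sh. des sh T = d}. q ^ maj sh T)"

definition SSYT :: "nat list \<Rightarrow> nat \<Rightarrow> (nat \<times> nat \<Rightarrow> nat) set" where
  "SSYT \<beta> m = {T. (\<forall>c\<in>cells \<beta>. T c \<in> {1..m})
     \<and> (\<forall>i j. (i, j + 1) \<in> cells \<beta> \<longrightarrow> T (i, j) \<le> T (i, j + 1))
     \<and> (\<forall>i j. (i + 1, j) \<in> cells \<beta> \<longrightarrow> T (i, j) < T (i + 1, j))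
     \<and> (\<forall>c. c \<notin> cells \<beta> \<longrightarrow> T c = 0)}"

definition schur :: "nat list \<Rightarrow> nat \<Rightarrow> (nat \<Rightarrow> 'a::comm_ring_1) \<Rightarrow> 'a" where
  "schur \<beta> m x = (\<Sum>T\<in>SSYT \<beta> m. \<Prod>c\<in>cells \<beta>. x (T c))"

end

theory Submission
  imports Defs "HOL-Library.Product_Lexorder"
begin

lemma filter_len_nth:
  assumes "sorted_wrt (\<ge>) (xs::nat list)"
  shows "i < length (filter (\<lambda>p. c \<le> p) xs) \<longleftrightarrow> i < length xs \<and> c \<le> xs ! i"
  using assms
proof (induction xs arbitrary: i)
  case Nil then show ?case by simp
next
  case (Cons a xs)
  show ?case
  proof (cases "c \<le> a")
    case True
    then show ?thesis using Cons by (cases i) auto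
  next
    case False
    then have "filter (\<lambda>p. c \<le> p) xs = []" using Cons.prems by (auto simp: filter_empty_conv)
    then show ?thesis using False Cons.prems by (cases i) (auto, meson le_trans nth_mem)
  qed
qed

lemma cells_Suc:
  assumes "is_partition \<beta>"
  shows "(Suc s, i) \<in> cells (k # conjugate \<beta>) \<longleftrightarrow> (i, s) \<in> cells \<beta>"
proof -
  have sw: "sorted_wrt (\<ge>) \<beta>" using assms by (simp add: is_partition_def)
  let ?M = "Max (insert 0 (set \<beta>))"
  have len: "length (conjugate \<beta>) = ?M" by (simp add: conjugate_def)
  have nth: "s < ?M \<Longrightarrow> conjugate \<beta> ! s = length (filter (\<lambda>p. Suc s \<le> p) \<beta>)"
    unfolding conjugate_def by (simp del: upt_Suc)
  show ?thesis
  proof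
    assume "(Suc s, i) \<in> cells (k # conjugate \<beta>)"
    then have "s < ?M" "i < conjugate \<beta> ! s" by (auto simp: cells_def len)
    then show "(i, s) \<in> cells \<beta>" using nth filter_len_nth[OF sw] by (auto simp: cells_def)
  next
    assume a: "(i, s) \<in> cells \<beta>"
    then have "\<beta> ! i \<in> insert 0 (set \<beta>)" by (auto simp: cells_def nth_mem)
    then have "\<beta> ! i \<le> ?M" by (intro Max_ge) auto
    moreover have "s < \<beta> ! i" using a by (simp add: cells_def)
    ultimately have "s < ?M" by linarith
    then show "(Suc s, i) \<in> cells (k # conjugate \<beta>)" using a nth filter_len_nth[OF sw]
      by (auto simp: cells_def len)
  qed
qed

lemma cells_0: "(0, c) \<in> cells (k # xs) \<longleftrightarrow> c < k" by (simp add: cells_def)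

lemma card_cells: "card (cells sh) = sum_list sh"
proof -
  have "cells sh = (SIGMA i:{..<length sh}. {..<sh!i})" by (auto simp: cells_def)
  then show ?thesis by (simp add: card_SigmaI sum_list_sum_nth atLeast0LessThan)
qed

lemma finite_cells: "finite (cells sh)"
proof -
  have "cells sh = (SIGMA i:{..<length sh}. {..<sh!i})" by (auto simp: cells_def)
  then show ?thesis by simp
qed

lemma rank_mono:
  fixes key :: "'a \<Rightarrow> 'b::linorder"
  assumes "finite X" "x \<in> X" "key x < key y"
  shows "card {z\<in>X. key z < key x} < card {z\<in>X. key z < key y}"
proof (rule psubset_card_mono)
  show "finite {z\<in>X. key z < key y}" using assms by simp
  have "{z\<in>X. key z < key x} \<subseteq> {z\<in>X. key z < key y}"
    using assms(3) by (auto intro: less_trans)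
  moreover have "x \<notin> {z\<in>X. key z < key x}" by simp
  moreover have "x \<in> {z\<in>X. key z < key y}" using assms(2,3) by auto
  ultimately show "{z\<in>X. key z < key x} \<subset> {z\<in>X. key z < key y}" by blast
qed

lemma rank_less_iff:
  fixes key :: "'a \<Rightarrow> 'b::linorder"
  assumes "finite X" "inj_on key X" "x \<in> X" "y \<in> X"
  shows "card {z\<in>X. key z < key x} < card {z\<in>X. key z < key y} \<longleftrightarrow> key x < key y"
proof
  assume "key x < key y" then show "card {z\<in>X. key z < key x} < card {z\<in>X. key z < key y}"
    using rank_mono[where X=X and x=x and y=y and key=key] assms by simp
next
  assume a: "card {z\<in>X. key z < key x} < card {z\<in>X. key z < key y}"
  show "key x < key y"
  proof (rule ccontr)
    assume "\<not> key x < key y"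
    then have "key y < key x \<or> key y = key x" by auto
    then show False
    proof
      assume "key y < key x" then show False using rank_mono[where X=X and x=y and y=x and key=key] assms a by simp
    next
      assume "key y = key x" then show False using a by simp
    qed
  qed
qed

lemma rank_bij:
  fixes key :: "'a \<Rightarrow> 'b::linorder"
  assumes "finite X" "inj_on key X"
  shows "bij_betw (\<lambda>x. Suc (card {z\<in>X. key z < key x})) X {1..card X}"
proof -
  let ?r = "\<lambda>x. Suc (card {z\<in>X. key z < key x})"
  have inj: "inj_on ?r X"
  proof (rule inj_onI)
    fix x y assume xy: "x \<in> X" "y \<in> X" "?r x = ?r y"
    show "x = y"
    proof (rule ccontr)
      assume "x \<noteq> y"
      then have "key x \<noteq> key y" using assms(2) xy inj_on_def by metis
      then have "key x < key y \<or> key y < key x" by auto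
      then show False
      proof
        assume "key x < key y"
        from rank_mono[where X=X and x=x and y=y and key=key, OF assms(1) xy(1) this] show False using xy(3) by simp
      next
        assume "key y < key x"
        from rank_mono[where X=X and x=y and y=x and key=key, OF assms(1) xy(2) this] show False using xy(3) by simp
      qed
    qed
  qed
  have sub: "?r ` X \<subseteq> {1..card X}"
  proof
    fix v assume "v \<in> ?r ` X"
    then obtain x where x: "x \<in> X" "v = ?r x" by auto
    have "{z\<in>X. key z < key x} \<subset> X" using x by auto
    then have "card {z\<in>X. key z < key x} < card X" using assms(1) psubset_card_mono by blast
    then show "v \<in> {1..card X}" using x by auto
  qed
  have "card (?r ` X) = card {1..card X}" using card_image[OF inj] by simp
  then have "?r ` X = {1..card X}" using sub by (intro card_subset_eq) auto
  then show ?thesis using inj by (simp add: bij_betw_def)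
qed

definition R0 :: "nat \<Rightarrow> (nat \<times> nat) set" where "R0 k = (\<lambda>c. (0, c)) ` {..<k}"

definition key :: "(nat \<times> nat \<Rightarrow> nat) \<Rightarrow> nat \<times> nat \<Rightarrow> nat \<times> nat" where
  "key P x = (if fst x = 0 then (Suc (snd x), 0) else (P (snd x, fst x - 1), fst x))"

definition Phi :: "nat list \<Rightarrow> nat \<Rightarrow> (nat \<times> nat \<Rightarrow> nat) \<Rightarrow> nat \<times> nat \<Rightarrow> nat" where
  "Phi \<beta> k P x = (if x \<in> cells (k # conjugate \<beta>)
     then Suc (card {y\<in>cells (k # conjugate \<beta>). key P y < key P x}) else 0)"

definition Psi :: "nat list \<Rightarrow> nat \<Rightarrow> (nat \<times> nat \<Rightarrow> nat) \<Rightarrow> nat \<times> nat \<Rightarrow> nat" where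
  "Psi \<beta> k T x = (if x \<in> cells \<beta> then card {c. c < k \<and> T (0, c) < T (Suc (snd x), fst x)} else 0)"

locale Setup =
  fixes \<beta> :: "nat list" and k :: nat
  assumes part: "is_partition \<beta>" and len: "length \<beta> \<le> k"
begin

lemma sw: "sorted_wrt (\<ge>) \<beta>" using part by (simp add: is_partition_def)

lemma cells_lam: "x \<in> cells (k # conjugate \<beta>) \<longleftrightarrow>
   (fst x = 0 \<and> snd x < k) \<or> (0 < fst x \<and> (snd x, fst x - 1) \<in> cells \<beta>)"
proof (cases x)
  case (Pair a b)
  show ?thesis
  proof (cases a)
    case 0 then show ?thesis using Pair cells_0[of b k] by simp
  next
    case (Suc s) then show ?thesis using Pair cells_Suc[OF part, of s b k] by simp
  qed
qed

lemma B_down_row: "(i, r) \<in> cells \<beta> \<Longrightarrow> r' \<le> r \<Longrightarrow> (i, r') \<in> cells \<beta>"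
  by (auto simp: cells_def)

lemma B_down_col: "(i, r) \<in> cells \<beta> \<Longrightarrow> i' \<le> i \<Longrightarrow> (i', r) \<in> cells \<beta>"
proof -
  assume a: "(i, r) \<in> cells \<beta>" "i' \<le> i"
  then have "\<beta> ! i \<le> \<beta> ! i'" using sw by (cases "i' = i") (auto simp: cells_def sorted_wrt_iff_nth_less)
  then show ?thesis using a by (auto simp: cells_def)
qed

lemma B_lt_k: "(i, r) \<in> cells \<beta> \<Longrightarrow> i < k" using len by (auto simp: cells_def)

lemma cells_lam_eq: "cells (k # conjugate \<beta>) = R0 k \<union> (\<lambda>(i, r). (Suc r, i)) ` cells \<beta>"
proof (rule set_eqI)
  fix x :: "nat \<times> nat"
  show "x \<in> cells (k # conjugate \<beta>) \<longleftrightarrow> x \<in> R0 k \<union> (\<lambda>(i, r). (Suc r, i)) ` cells \<beta>"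
  proof (cases x)
    case (Pair a b)
    show ?thesis
    proof (cases a)
      case 0 then show ?thesis using Pair cells_lam by (auto simp: R0_def)
    next
      case (Suc s) then show ?thesis using Pair cells_lam
        by (auto simp: R0_def intro!: rev_image_eqI[where x="(b,s)"])
    qed
  qed
qed

lemma N_eq: "sum_list (k # conjugate \<beta>) = k + psize \<beta>"
proof -
  have inj: "inj_on (\<lambda>(i, r). (Suc r, i)) (cells \<beta>)" by (auto simp: inj_on_def)
  have disj: "R0 k \<inter> (\<lambda>(i, r). (Suc r, i)) ` cells \<beta> = {}" by (auto simp: R0_def)
  have "card (cells (k # conjugate \<beta>)) = card (R0 k) + card ((\<lambda>(i, r). (Suc r, i)) ` cells \<beta>)"
    unfolding cells_lam_eq using disj finite_cells by (intro card_Un_disjoint) (auto simp: R0_def)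
  also have "\<dots> = k + card (cells \<beta>)" using card_image[OF inj]
    by (simp add: R0_def card_image inj_on_def)
  finally show ?thesis by (simp add: card_cells psize_def)
qed

end

context Setup begin

lemma P_range: "P \<in> SSYT \<beta> k \<Longrightarrow> w \<in> cells \<beta> \<Longrightarrow> 1 \<le> P w \<and> P w \<le> k"
  by (auto simp: SSYT_def)

lemma P_col: "P \<in> SSYT \<beta> k \<Longrightarrow> (i', r) \<in> cells \<beta> \<Longrightarrow> i < i' \<Longrightarrow> P (i, r) < P (i', r)"
proof (induction i')
  case 0 then show ?case by simp
next
  case (Suc m)
  have m: "(m, r) \<in> cells \<beta>" using B_down_col[OF Suc.prems(2)] by simp
  have step: "P (m, r) < P (Suc m, r)" using Suc.prems(1,2) by (auto simp: SSYT_def)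
  show ?case
  proof (cases "i = m")
    case True then show ?thesis using step by simp
  next
    case False then have "i < m" using Suc.prems by simp
    then show ?thesis using Suc.IH[OF Suc.prems(1) m] step by simp
  qed
qed

lemma P_ge: "P \<in> SSYT \<beta> k \<Longrightarrow> (i, r) \<in> cells \<beta> \<Longrightarrow> Suc i \<le> P (i, r)"
proof (induction i)
  case 0 then show ?case using P_range by fastforce
next
  case (Suc m)
  have m: "(m, r) \<in> cells \<beta>" using B_down_col[OF Suc.prems(2)] by simp
  have "P (m, r) < P (Suc m, r)" using P_col[OF Suc.prems(1,2)] by simp
  then show ?case using Suc.IH[OF Suc.prems(1) m] by simp
qed

lemma P_row1: "P \<in> SSYT \<beta> k \<Longrightarrow> (i, Suc r) \<in> cells \<beta> \<Longrightarrow> P (i, r) \<le> P (i, Suc r)"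
  by (auto simp: SSYT_def)

lemma key_0[simp]: "key P (0, c) = (Suc c, 0)" by (simp add: key_def)
lemma key_Suc[simp]: "key P (Suc s, i) = (P (i, s), Suc s)" by (simp add: key_def)

lemma cells_lam_0: "(0, c) \<in> cells (k # conjugate \<beta>) \<longleftrightarrow> c < k"
  using cells_lam by simp
lemma cells_lam_Suc: "(Suc s, i) \<in> cells (k # conjugate \<beta>) \<longleftrightarrow> (i, s) \<in> cells \<beta>"
  using cells_lam by simp

lemma key_inj: assumes P: "P \<in> SSYT \<beta> k" shows "inj_on (key P) (cells (k # conjugate \<beta>))"
proof (rule inj_onI)
  fix x y assume x: "x \<in> cells (k # conjugate \<beta>)" and y: "y \<in> cells (k # conjugate \<beta>)"
    and e: "key P x = key P y"
  obtain a b c d where xy: "x = (a, b)" "y = (c, d)" by fastforce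
  show "x = y"
  proof (cases a)
    case 0
    then show ?thesis using e xy by (cases c) auto
  next
    case (Suc s)
    show ?thesis
    proof (cases c)
      case 0 then show ?thesis using e xy Suc by auto
    next
      case (Suc t)
      have st: "s = t" and pe: "P (b, s) = P (d, s)" using e xy Suc \<open>a = Suc s\<close> by auto
      have bc: "(b, s) \<in> cells \<beta>" "(d, s) \<in> cells \<beta>"
        using x y xy Suc \<open>a = Suc s\<close> st cells_lam_Suc by auto
      have "b = d"
      proof (rule ccontr)
        assume "b \<noteq> d"
        then have "b < d \<or> d < b" by auto
        then show False using P_col[OF P bc(2), of b] P_col[OF P bc(1), of d] pe by auto
      qed
      then show ?thesis using xy st Suc \<open>a = Suc s\<close> by simp
    qed
  qed
qed

lemma Phi_less:
  assumes "P \<in> SSYT \<beta> k" "x \<in> cells (k # conjugate \<beta>)" "y \<in> cells (k # conjugate \<beta>)"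
  shows "Phi \<beta> k P x < Phi \<beta> k P y \<longleftrightarrow> key P x < key P y"
  using rank_less_iff[OF finite_cells key_inj[OF assms(1)] assms(2,3)] assms(2,3)
  by (simp add: Phi_def)

lemma Phi_bij: assumes "P \<in> SSYT \<beta> k"
  shows "bij_betw (Phi \<beta> k P) (cells (k # conjugate \<beta>)) {1..sum_list (k # conjugate \<beta>)}"
proof -
  have "bij_betw (\<lambda>x. Suc (card {z\<in>cells (k # conjugate \<beta>). key P z < key P x}))
      (cells (k # conjugate \<beta>)) {1..card (cells (k # conjugate \<beta>))}"
    by (rule rank_bij[OF finite_cells key_inj[OF assms]])
  then show ?thesis unfolding card_cells
    by (rule bij_betw_cong[THEN iffD1, rotated]) (simp add: Phi_def)
qed

lemma Phi_SYT: assumes P: "P \<in> SSYT \<beta> k" shows "Phi \<beta> k P \<in> SYT (k # conjugate \<beta>)"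
  unfolding SYT_def
proof (intro CollectI conjI allI impI)
  show "bij_betw (Phi \<beta> k P) (cells (k # conjugate \<beta>)) {1..sum_list (k # conjugate \<beta>)}"
    by (rule Phi_bij[OF P])
next
  fix i j assume a: "(i, j + 1) \<in> cells (k # conjugate \<beta>)"
  have b: "(i, j) \<in> cells (k # conjugate \<beta>)" using a by (auto simp: cells_def)
  have "key P (i, j) < key P (i, j + 1)"
  proof (cases i)
    case 0 then show ?thesis by (simp add: less_prod_def)
  next
    case (Suc s)
    then have "(j + 1, s) \<in> cells \<beta>" using a cells_lam_Suc by simp
    then show ?thesis using Suc P_col[OF P, of "j+1" s j] by (simp add: less_prod_def)
  qed
  then show "Phi \<beta> k P (i, j) < Phi \<beta> k P (i, j + 1)" using Phi_less[OF P b a] by simp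
next
  fix i j assume a: "(i + 1, j) \<in> cells (k # conjugate \<beta>)"
  then have aj: "(j, i) \<in> cells \<beta>" using cells_lam_Suc by simp
  have b: "(i, j) \<in> cells (k # conjugate \<beta>)"
  proof (cases i)
    case 0 then show ?thesis using B_lt_k[OF aj] cells_lam_0 by simp
  next
    case (Suc s) then show ?thesis using B_down_row[OF aj, of s] cells_lam_Suc by simp
  qed
  have "key P (i, j) < key P (i + 1, j)"
  proof (cases i)
    case 0 then show ?thesis using P_ge[OF P aj] by (simp add: less_prod_def)
  next
    case (Suc s) then show ?thesis using P_row1[OF P, of j s] aj by (simp add: less_prod_def)
  qed
  then show "Phi \<beta> k P (i, j) < Phi \<beta> k P (i + 1, j)" using Phi_less[OF P b a] by simp
next
  fix c assume "c \<notin> cells (k # conjugate \<beta>)"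
  then show "Phi \<beta> k P c = 0" by (simp add: Phi_def)
qed

end

lemma double_sum_lt: "2 * (\<Sum>m<n. m) = n * (n - (1::nat))"
proof (induction n)
  case 0 then show ?case by simp
next
  case (Suc n) then show ?case by (cases n) (simp_all add: algebra_simps)
qed

context Setup begin

lemma Phi_range: "P \<in> SSYT \<beta> k \<Longrightarrow> x \<in> cells (k # conjugate \<beta>) \<Longrightarrow>
   1 \<le> Phi \<beta> k P x \<and> Phi \<beta> k P x \<le> sum_list (k # conjugate \<beta>)"
  using Phi_bij[of P] by (auto simp: bij_betw_def)

lemma Phi_inj: "P \<in> SSYT \<beta> k \<Longrightarrow> x \<in> cells (k # conjugate \<beta>) \<Longrightarrow> y \<in> cells (k # conjugate \<beta>)
   \<Longrightarrow> Phi \<beta> k P x = Phi \<beta> k P y \<Longrightarrow> x = y"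
  using Phi_bij[of P] by (auto simp: bij_betw_def inj_on_def)

lemma Phi_surj: "P \<in> SSYT \<beta> k \<Longrightarrow> 1 \<le> m \<Longrightarrow> m \<le> sum_list (k # conjugate \<beta>) \<Longrightarrow>
   \<exists>x\<in>cells (k # conjugate \<beta>). Phi \<beta> k P x = m"
proof -
  assume a: "P \<in> SSYT \<beta> k" "1 \<le> m" "m \<le> sum_list (k # conjugate \<beta>)"
  then have "m \<in> Phi \<beta> k P ` cells (k # conjugate \<beta>)"
    using Phi_bij[OF a(1)] unfolding bij_betw_def by simp
  then show ?thesis by auto
qed

lemma R0_cells: "R0 k \<subseteq> cells (k # conjugate \<beta>)"
  using cells_lam_0 by (auto simp: R0_def)

lemma Phi_descents:
  assumes P: "P \<in> SSYT \<beta> k"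
  shows "descents (k # conjugate \<beta>) (Phi \<beta> k P) =
     {m. 1 \<le> m \<and> m < sum_list (k # conjugate \<beta>) \<and> m + 1 \<notin> Phi \<beta> k P ` R0 k}"
    (is "?L = ?R")
proof
  show "?L \<subseteq> ?R"
  proof
    fix m assume "m \<in> ?L"
    then obtain i j i' j' where m: "1 \<le> m" "m < sum_list (k # conjugate \<beta>)"
      "(i, j) \<in> cells (k # conjugate \<beta>)" "Phi \<beta> k P (i, j) = m"
      "(i', j') \<in> cells (k # conjugate \<beta>)" "Phi \<beta> k P (i', j') = m + 1" "i < i'"
      unfolding descents_def by blast
    have "m + 1 \<notin> Phi \<beta> k P ` R0 k"
    proof
      assume "m + 1 \<in> Phi \<beta> k P ` R0 k"
      then obtain z where z: "z \<in> R0 k" "Phi \<beta> k P z = m + 1" by auto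
      have zc: "z \<in> cells (k # conjugate \<beta>)" using z R0_cells by auto
      then have "z = (i', j')" using Phi_inj[OF P zc m(5)] z m(6) by simp
      then show False using z m(7) by (auto simp: R0_def)
    qed
    then show "m \<in> ?R" using m by simp
  qed
next
  show "?R \<subseteq> ?L"
  proof
    fix m assume "m \<in> ?R"
    then have m: "1 \<le> m" "m < sum_list (k # conjugate \<beta>)" "m + 1 \<notin> Phi \<beta> k P ` R0 k" by auto
    obtain x where x: "x \<in> cells (k # conjugate \<beta>)" "Phi \<beta> k P x = m"
      using Phi_surj[OF P m(1)] m(2) by auto
    obtain y where y: "y \<in> cells (k # conjugate \<beta>)" "Phi \<beta> k P y = m + 1"
      using Phi_surj[OF P, of "m+1"] m(2) by auto
    obtain a b where ab: "x = (a, b)" by fastforce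
    obtain s j where sj: "y = (Suc s, j)"
    proof (cases "fst y")
      case 0
      then have "y \<in> R0 k" using y(1) cells_lam unfolding R0_def
        by (intro rev_image_eqI[where x="snd y"]) (auto simp: prod_eq_iff)
      then have "Phi \<beta> k P y \<in> Phi \<beta> k P ` R0 k" by (rule imageI)
      then show ?thesis using y(2) m(3) by simp
    next
      case (Suc s) then show ?thesis using that[of s "snd y"] by (cases y) auto
    qed
    have js: "(j, s) \<in> cells \<beta>" using y(1) sj cells_lam_Suc by simp
    define J where "J = P (j, s)"
    have J: "1 \<le> J" "J \<le> k" using P_range[OF P js] J_def by auto
    have z0: "(0, J - 1) \<in> cells (k # conjugate \<beta>)" using J cells_lam_0 by simp
    have kz: "key P (0, J - 1) < key P y" using J sj J_def by (simp add: less_prod_def)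
    then have "Phi \<beta> k P (0, J - 1) < Phi \<beta> k P y" using Phi_less[OF P z0 y(1)] by simp
    then have le: "Phi \<beta> k P (0, J - 1) \<le> m" using y(2) by simp
    have "a < Suc s"
    proof (cases "Phi \<beta> k P (0, J - 1) = m")
      case True
      then have "(0, J - 1) = x" using Phi_inj[OF P z0 x(1)] x(2) by simp
      then show ?thesis using ab by simp
    next
      case False
      then have "Phi \<beta> k P (0, J - 1) < Phi \<beta> k P x" using le x(2) by simp
      then have k1: "key P (0, J - 1) < key P x" using Phi_less[OF P z0 x(1)] by simp
      have "Phi \<beta> k P x < Phi \<beta> k P y" using x y by simp
      then have k2: "key P x < key P y" using Phi_less[OF P x(1) y(1)] by simp
      show ?thesis
      proof (cases a)
        case 0 then show ?thesis by simp
      next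
        case (Suc t)
        then show ?thesis using k1 k2 ab sj J J_def by (auto simp: less_prod_def)
      qed
    qed
    then have "\<exists>i j i' j'. (i, j) \<in> cells (k # conjugate \<beta>) \<and> Phi \<beta> k P (i, j) = m \<and>
       (i', j') \<in> cells (k # conjugate \<beta>) \<and> Phi \<beta> k P (i', j') = m + 1 \<and> i < i'"
      using x y ab sj by blast
    then show "m \<in> ?L" unfolding descents_def using m(1,2) by blast
  qed
qed

end

context Setup begin

lemma Phi_R0:
  assumes P: "P \<in> SSYT \<beta> k" and c: "c < k"
  shows "Phi \<beta> k P (0, c) = Suc (c + card {w\<in>cells \<beta>. P w \<le> c})"
proof -
  let ?X = "cells (k # conjugate \<beta>)"
  let ?e = "\<lambda>(i::nat, r::nat). (Suc r, i)"
  have eq: "{y\<in>?X. key P y < key P (0, c)} = (\<lambda>c'. (0, c')) ` {..<c} \<union> ?e ` {w\<in>cells \<beta>. P w \<le> c}"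
  proof (rule set_eqI)
    fix y :: "nat \<times> nat"
    obtain a b where y: "y = (a, b)" by fastforce
    show "y \<in> {y\<in>?X. key P y < key P (0, c)} \<longleftrightarrow> y \<in> (\<lambda>c'. (0, c')) ` {..<c} \<union> ?e ` {w\<in>cells \<beta>. P w \<le> c}"
    proof (cases a)
      case 0
      have l: "y \<in> {y\<in>?X. key P y < key P (0, c)} \<longleftrightarrow> b < c"
        using y 0 c cells_lam_0[of b] by (auto simp: less_prod_def)
      have r1: "y \<in> (\<lambda>c'. (0, c')) ` {..<c} \<longleftrightarrow> b < c" using y 0 by auto
      have r2: "y \<notin> ?e ` {w\<in>cells \<beta>. P w \<le> c}" using y 0 by auto
      show ?thesis using l r1 r2 by blast
    next
      case (Suc s)
      have r2: "y \<in> ?e ` {w\<in>cells \<beta>. P w \<le> c} \<longleftrightarrow> (b, s) \<in> cells \<beta> \<and> P (b, s) \<le> c"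
        using y Suc by (auto intro!: rev_image_eqI[where x="(b,s)"])
      have r1: "y \<notin> (\<lambda>c'. (0, c')) ` {..<c}" using y Suc by auto
      have l: "y \<in> {y\<in>?X. key P y < key P (0, c)} \<longleftrightarrow> (b, s) \<in> cells \<beta> \<and> P (b, s) \<le> c"
        using y Suc cells_lam_Suc[of s b] by (auto simp: less_prod_def)
      show ?thesis using l r1 r2 by blast
    qed
  qed
  have inj: "inj_on ?e {w\<in>cells \<beta>. P w \<le> c}" by (auto simp: inj_on_def)
  have "card {y\<in>?X. key P y < key P (0, c)} = card ((\<lambda>c'. (0::nat, c')) ` {..<c}) + card (?e ` {w\<in>cells \<beta>. P w \<le> c})"
    unfolding eq using finite_cells by (intro card_Un_disjoint) auto
  also have "\<dots> = c + card {w\<in>cells \<beta>. P w \<le> c}"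
  proof -
    have "card ((\<lambda>c'. (0::nat, c')) ` {..<c}) = c" by (subst card_image) (auto simp: inj_on_def)
    then show ?thesis using card_image[OF inj] by simp
  qed
  moreover have "(0, c) \<in> ?X" using c cells_lam_0 by simp
  ultimately show ?thesis unfolding Phi_def by simp
qed

definition vv :: "(nat \<times> nat \<Rightarrow> nat) \<Rightarrow> nat \<Rightarrow> nat" where
  "vv P c = c + card {w\<in>cells \<beta>. P w \<le> c}"

lemma vv_mono: "c < c' \<Longrightarrow> vv P c < vv P c'"
proof -
  assume "c < c'"
  moreover have "card {w\<in>cells \<beta>. P w \<le> c} \<le> card {w\<in>cells \<beta>. P w \<le> c'}"
    using \<open>c < c'\<close> finite_cells by (intro card_mono) auto
  ultimately show ?thesis by (simp add: vv_def)
qed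

lemma vv_inj: "inj_on (vv P) A"
proof (rule inj_onI)
  fix x y assume "vv P x = vv P y"
  then show "x = y" using vv_mono[of x y P] vv_mono[of y x P] by (cases x y rule: linorder_cases) auto
qed

lemma k0: "k = 0 \<Longrightarrow> \<beta> = []" using len by simp

lemma Phi_D:
  assumes P: "P \<in> SSYT \<beta> k"
  shows "{m. 1 \<le> m \<and> m < sum_list (k # conjugate \<beta>) \<and> m + 1 \<notin> Phi \<beta> k P ` R0 k}
     = {..<sum_list (k # conjugate \<beta>)} - vv P ` {..<k}"
proof -
  have img: "Phi \<beta> k P ` R0 k = Suc ` vv P ` {..<k}"
    using Phi_R0[OF P] by (auto simp: R0_def vv_def image_iff)
  have v0: "0 < k \<Longrightarrow> vv P 0 = 0"
  proof -
    have e: "{w\<in>cells \<beta>. P w \<le> 0} = {}" using P_range[OF P] by fastforce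
    show "vv P 0 = 0" unfolding vv_def e by simp
  qed
  have pos: "m < sum_list (k # conjugate \<beta>) \<Longrightarrow> 0 < k" for m
    using k0 by (cases "k = 0") (auto simp: conjugate_def)
  show ?thesis
  proof (rule set_eqI)
    fix m
    have A: "m + 1 \<in> Phi \<beta> k P ` R0 k \<longleftrightarrow> m \<in> vv P ` {..<k}"
      unfolding img by (simp add: inj_image_mem_iff)
    show "m \<in> {m. 1 \<le> m \<and> m < sum_list (k # conjugate \<beta>) \<and> m + 1 \<notin> Phi \<beta> k P ` R0 k}
      \<longleftrightarrow> m \<in> {..<sum_list (k # conjugate \<beta>)} - vv P ` {..<k}"
    proof (cases "m = 0")
      case True
      have "0 < sum_list (k # conjugate \<beta>) \<Longrightarrow> 0 \<in> vv P ` {..<k}"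
        using pos[of 0] v0 by (metis imageI lessThan_iff)
      moreover have "\<not> (1::nat) \<le> 0" by simp
      ultimately show ?thesis unfolding True mem_Collect_eq Diff_iff lessThan_iff by blast
    next
      case False then show ?thesis using A by auto
    qed
  qed
qed

end

lemma swap_count:
  fixes P :: "'a \<Rightarrow> nat"
  assumes "finite A"
  shows "(\<Sum>c<k. card {w\<in>A. P w \<le> c}) = (\<Sum>w\<in>A. k - P w)"
proof -
  have "(\<Sum>c<k. card {w\<in>A. P w \<le> c}) = (\<Sum>c<k. \<Sum>w\<in>A. if P w \<le> c then 1 else 0)"
  proof (rule sum.cong)
    fix c
    have "card {w\<in>A. P w \<le> c} = (\<Sum>w\<in>{w\<in>A. P w \<le> c}. 1)" by simp
    also have "\<dots> = (\<Sum>w\<in>A. if P w \<le> c then 1 else 0)"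
      using sum.inter_filter[OF assms, of "\<lambda>_. 1::nat"] by simp
    finally show "card {w\<in>A. P w \<le> c} = (\<Sum>w\<in>A. if P w \<le> c then 1 else 0)" .
  qed simp
  also have "\<dots> = (\<Sum>w\<in>A. \<Sum>c<k. if P w \<le> c then 1 else 0)" by (rule sum.swap)
  also have "\<dots> = (\<Sum>w\<in>A. k - P w)"
  proof (rule sum.cong)
    fix w
    have "(\<Sum>c<k. if P w \<le> c then 1 else (0::nat)) = (\<Sum>c\<in>{c\<in>{..<k}. P w \<le> c}. 1)"
      using sum.inter_filter[of "{..<k}" "\<lambda>_. 1::nat" "\<lambda>c. P w \<le> c"] by simp
    also have "{c\<in>{..<k}. P w \<le> c} = {P w..<k}" by auto
    finally show "(\<Sum>c<k. if P w \<le> c then 1 else (0::nat)) = k - P w" by simp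
  qed simp
  finally show ?thesis .
qed

context Setup begin

lemma Phi_des_maj:
  assumes P: "P \<in> SSYT \<beta> k"
  shows "des (k # conjugate \<beta>) (Phi \<beta> k P) = psize \<beta>"
    and "maj (k # conjugate \<beta>) (Phi \<beta> k P) = (psize \<beta> + 1 choose 2) + (\<Sum>w\<in>cells \<beta>. P w - 1)"
proof -
  let ?N = "sum_list (k # conjugate \<beta>)"
  let ?V = "vv P ` {..<k}"
  have desc: "descents (k # conjugate \<beta>) (Phi \<beta> k P) = {..<?N} - ?V"
    using Phi_descents[OF P] Phi_D[OF P] by simp
  have sub: "?V \<subseteq> {..<?N}"
  proof
    fix v assume "v \<in> ?V"
    then obtain c where c: "c < k" "v = vv P c" by auto
    have "(0, c) \<in> cells (k # conjugate \<beta>)" using c cells_lam_0 by simp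
    then have "Phi \<beta> k P (0, c) \<le> ?N" using Phi_range[OF P] by blast
    then show "v \<in> {..<?N}" using Phi_R0[OF P c(1)] c(2) by (simp add: vv_def)
  qed
  have cardV: "card ?V = k" using card_image[OF vv_inj] by simp
  have Nb: "?N = k + psize \<beta>" by (rule N_eq)
  show "des (k # conjugate \<beta>) (Phi \<beta> k P) = psize \<beta>"
    unfolding des_def desc using card_Diff_subset[OF _ sub] cardV Nb by simp
  have "\<Sum>{..<?N} = \<Sum>({..<?N} - ?V) + \<Sum>?V" using sum.subset_diff[OF sub] by simp
  moreover have "\<Sum>?V = (\<Sum>c<k. vv P c)" using sum.reindex[OF vv_inj] by simp
  moreover have "(\<Sum>c<k. vv P c) = (\<Sum>c<k. c) + (\<Sum>w\<in>cells \<beta>. k - P w)"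
    using swap_count[OF finite_cells, where k=k and P=P] by (simp add: vv_def sum.distrib)
  ultimately have F3: "maj (k # conjugate \<beta>) (Phi \<beta> k P) + (\<Sum>c<k. c) + (\<Sum>w\<in>cells \<beta>. k - P w) = \<Sum>{..<?N}"
    unfolding maj_def desc by simp
  let ?b = "psize \<beta>"
  have b: "card (cells \<beta>) = ?b" by (simp add: card_cells psize_def)
  have F4: "(\<Sum>w\<in>cells \<beta>. k - P w) + (\<Sum>w\<in>cells \<beta>. P w - 1) = ?b * (k - 1)"
  proof -
    have "(\<Sum>w\<in>cells \<beta>. k - P w) + (\<Sum>w\<in>cells \<beta>. P w - 1) = (\<Sum>w\<in>cells \<beta>. k - 1)"
      unfolding sum.distrib[symmetric] using P_range[OF P] by (intro sum.cong) auto
    then show ?thesis using b by simp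
  qed
  have F1: "2 * \<Sum>{..<?N} = ?N * (?N - 1)" using double_sum_lt[of ?N] by simp
  have F2: "2 * (\<Sum>c<k. c) = k * (k - 1)" using double_sum_lt[of k] by simp
  have F5: "2 * (?b + 1 choose 2) = (?b + 1) * ?b" by (simp add: choose_two)
  show "maj (k # conjugate \<beta>) (Phi \<beta> k P) = (?b + 1 choose 2) + (\<Sum>w\<in>cells \<beta>. P w - 1)"
  proof (cases k)
    case 0
    then have "\<beta> = []" using k0 by simp
    then have "cells \<beta> = {}" "?b = 0" by (auto simp: cells_def psize_def)
    then have z: "?N = 0" "?b = 0" "cells \<beta> = {}" using Nb 0 by simp_all
    have "maj (k # conjugate \<beta>) (Phi \<beta> k P) = 0" using F3 unfolding z(1) by simp
    moreover have "(?b + 1 choose 2) = 0" unfolding z(2) by (simp add: binomial_eq_0)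
    ultimately show ?thesis using z(3) by simp
  next
    case (Suc k')
    define M where "M = maj (k # conjugate \<beta>) (Phi \<beta> k P)"
    define S1 where "S1 = (\<Sum>w\<in>cells \<beta>. k - P w)"
    define S2 where "S2 = (\<Sum>w\<in>cells \<beta>. P w - 1)"
    define C where "C = (?b + 1 choose 2)"
    define G where "G = (\<Sum>c<k. c)"
    define H where "H = \<Sum>{..<?N}"
    have e1: "M + G + S1 = H" using F3 unfolding M_def G_def S1_def H_def .
    have e2: "S1 + S2 = ?b * k'" using F4 Suc unfolding S1_def S2_def by simp
    have e3: "2 * H = (k' + 1 + ?b) * (k' + ?b)" using F1 Nb Suc unfolding H_def by simp
    have e4: "2 * G = (k' + 1) * k'" using F2 Suc unfolding G_def by simp
    have e5: "2 * C = (?b + 1) * ?b" using F5 unfolding C_def .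
    have "M = C + S2"
    proof -
      have "2 * M + 2 * G + 2 * S1 = 2 * H" using e1 by simp
      then have "2 * M + (k' + 1) * k' + 2 * S1 = (k' + 1 + ?b) * (k' + ?b)" using e3 e4 by simp
      then have "2 * M + (k' + 1) * k' + 2 * (?b * k') = (k' + 1 + ?b) * (k' + ?b) + 2 * S2"
        using e2 by (simp add: algebra_simps)
      then have "2 * M = (?b + 1) * ?b + 2 * S2" by (simp add: algebra_simps)
      then show ?thesis using e5 by simp
    qed
    then show ?thesis unfolding M_def C_def S2_def .
  qed
qed

end

context Setup begin

lemma Psi_Phi: assumes P: "P \<in> SSYT \<beta> k" shows "Psi \<beta> k (Phi \<beta> k P) = P"
proof
  fix x :: "nat \<times> nat"
  obtain i r where x: "x = (i, r)" by fastforce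
  show "Psi \<beta> k (Phi \<beta> k P) x = P x"
  proof (cases "(i, r) \<in> cells \<beta>")
    case False
    then show ?thesis using P x by (simp add: Psi_def SSYT_def)
  next
    case True
    have cs: "(Suc r, i) \<in> cells (k # conjugate \<beta>)" using True cells_lam_Suc by simp
    have "{c. c < k \<and> Phi \<beta> k P (0, c) < Phi \<beta> k P (Suc r, i)} = {..<P (i, r)}"
    proof (rule set_eqI)
      fix c
      have "c < k \<Longrightarrow> Phi \<beta> k P (0, c) < Phi \<beta> k P (Suc r, i) \<longleftrightarrow> c < P (i, r)"
        using Phi_less[OF P _ cs, of "(0, c)"] cells_lam_0[of c] by (auto simp: less_prod_def)
      then show "c \<in> {c. c < k \<and> Phi \<beta> k P (0, c) < Phi \<beta> k P (Suc r, i)} \<longleftrightarrow> c \<in> {..<P (i, r)}"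
        using P_range[OF P True] by auto
    qed
    then show ?thesis using True x by (simp add: Psi_def)
  qed
qed

definition tgt where "tgt = {T \<in> SYT (k # conjugate \<beta>). des (k # conjugate \<beta>) T = psize \<beta>}"

lemma T_bij: "T \<in> tgt \<Longrightarrow> bij_betw T (cells (k # conjugate \<beta>)) {1..sum_list (k # conjugate \<beta>)}"
  by (simp add: tgt_def SYT_def)
lemma T_inj: "T \<in> tgt \<Longrightarrow> x \<in> cells (k # conjugate \<beta>) \<Longrightarrow> y \<in> cells (k # conjugate \<beta>) \<Longrightarrow> T x = T y \<Longrightarrow> x = y"
  using T_bij by (auto simp: bij_betw_def inj_on_def)
lemma T_range: "T \<in> tgt \<Longrightarrow> x \<in> cells (k # conjugate \<beta>) \<Longrightarrow> 1 \<le> T x \<and> T x \<le> sum_list (k # conjugate \<beta>)"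
  using T_bij by (fastforce simp: bij_betw_def)
lemma T_surj: "T \<in> tgt \<Longrightarrow> 1 \<le> m \<Longrightarrow> m \<le> sum_list (k # conjugate \<beta>) \<Longrightarrow> \<exists>x\<in>cells (k # conjugate \<beta>). T x = m"
proof -
  assume a: "T \<in> tgt" "1 \<le> m" "m \<le> sum_list (k # conjugate \<beta>)"
  then have "m \<in> T ` cells (k # conjugate \<beta>)" using T_bij[OF a(1)] unfolding bij_betw_def by simp
  then show ?thesis by auto
qed
lemma T_row: "T \<in> tgt \<Longrightarrow> (i, j + 1) \<in> cells (k # conjugate \<beta>) \<Longrightarrow> T (i, j) < T (i, j + 1)"
  by (simp add: tgt_def SYT_def)
lemma T_col: "T \<in> tgt \<Longrightarrow> (i + 1, j) \<in> cells (k # conjugate \<beta>) \<Longrightarrow> T (i, j) < T (i + 1, j)"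
  by (simp add: tgt_def SYT_def)
lemma T_zero: "T \<in> tgt \<Longrightarrow> x \<notin> cells (k # conjugate \<beta>) \<Longrightarrow> T x = 0"
  unfolding tgt_def SYT_def by blast
lemma T_des: "T \<in> tgt \<Longrightarrow> des (k # conjugate \<beta>) T = psize \<beta>"
  by (simp add: tgt_def)

lemma T_row0: "T \<in> tgt \<Longrightarrow> c' < k \<Longrightarrow> c < c' \<Longrightarrow> T (0, c) < T (0, c')"
proof (induction c')
  case 0 then show ?case by simp
next
  case (Suc m)
  have "T (0, m) < T (0, Suc m)" using T_row[OF Suc.prems(1), of 0 m] Suc.prems(2) cells_lam_0 by simp
  then show ?case using Suc by (cases "c = m") auto
qed

lemma T_colchain: "T \<in> tgt \<Longrightarrow> (i, r) \<in> cells \<beta> \<Longrightarrow> T (0, i) < T (Suc r, i)"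
proof (induction r)
  case 0 then show ?case using T_col[OF 0(1), of 0 i] cells_lam_Suc by simp
next
  case (Suc r)
  have "(i, r) \<in> cells \<beta>" using B_down_row[OF Suc.prems(2)] by simp
  then have "T (0, i) < T (Suc r, i)" using Suc by simp
  moreover have "T (Suc r, i) < T (Suc r + 1, i)" using T_col[OF Suc.prems(1), of "Suc r" i] Suc.prems(2) cells_lam_Suc by simp
  ultimately show ?case by simp
qed

end

context Setup begin

lemma T_desc:
  assumes T: "T \<in> tgt"
  shows "descents (k # conjugate \<beta>) T =
     {m. 1 \<le> m \<and> m < sum_list (k # conjugate \<beta>) \<and> m + 1 \<notin> T ` R0 k}"
    (is "?L = ?R")
proof -
  let ?N = "sum_list (k # conjugate \<beta>)"
  have sub: "?L \<subseteq> ?R"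
  proof
    fix m assume "m \<in> ?L"
    then obtain i j i' j' where m: "1 \<le> m" "m < ?N"
      "(i, j) \<in> cells (k # conjugate \<beta>)" "T (i, j) = m"
      "(i', j') \<in> cells (k # conjugate \<beta>)" "T (i', j') = m + 1" "i < i'"
      unfolding descents_def by blast
    have "m + 1 \<notin> T ` R0 k"
    proof
      assume "m + 1 \<in> T ` R0 k"
      then obtain z where z: "z \<in> R0 k" "T z = m + 1" by auto
      have zc: "z \<in> cells (k # conjugate \<beta>)" using z R0_cells by auto
      then have "z = (i', j')" using T_inj[OF T zc m(5)] z m(6) by simp
      then show False using z m(7) by (auto simp: R0_def)
    qed
    then show "m \<in> ?R" using m by simp
  qed
  let ?W = "(\<lambda>c. T (0, c) - 1) ` {..<k}"
  have disj: "?R \<inter> ?W = {}"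
  proof (rule ccontr)
    assume "?R \<inter> ?W \<noteq> {}"
    then obtain m c where mc: "m \<in> ?R" "c < k" "m = T (0, c) - 1" by auto
    have c0: "(0, c) \<in> cells (k # conjugate \<beta>)" using mc(2) cells_lam_0 by simp
    then have "m + 1 = T (0, c)" using T_range[OF T c0] mc(3) by simp
    moreover have "(0, c) \<in> R0 k" using mc(2) by (simp add: R0_def)
    ultimately have "m + 1 \<in> T ` R0 k" by (metis imageI)
    then show False using mc(1) by simp
  qed
  have Wsub: "?W \<subseteq> {..<?N}"
  proof
    fix v assume "v \<in> ?W"
    then obtain c where c: "c < k" "v = T (0, c) - 1" by auto
    have "(0, c) \<in> cells (k # conjugate \<beta>)" using c cells_lam_0 by simp
    then show "v \<in> {..<?N}" using T_range[OF T] c by fastforce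
  qed
  have Rsub: "?R \<subseteq> {..<?N}" by auto
  have injW: "inj_on (\<lambda>c. T (0, c) - 1) {..<k}"
  proof (rule inj_onI)
    fix c c' assume cc: "c \<in> {..<k}" "c' \<in> {..<k}" "T (0, c) - 1 = T (0, c') - 1"
    have c0: "(0, c) \<in> cells (k # conjugate \<beta>)" "(0, c') \<in> cells (k # conjugate \<beta>)"
      using cc cells_lam_0 by auto
    have "1 \<le> T (0, c)" "1 \<le> T (0, c')" using T_range[OF T c0(1)] T_range[OF T c0(2)] by auto
    then have "T (0, c) = T (0, c')" using cc(3) by linarith
    then show "c = c'" using T_inj[OF T c0] by simp
  qed
  have "card ?R + k = card (?R \<union> ?W)"
    using card_Un_disjoint[OF _ _ disj] card_image[OF injW] Rsub Wsub
    by (simp add: finite_subset)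
  also have "\<dots> \<le> ?N" using card_mono[of "{..<?N}" "?R \<union> ?W"] Rsub Wsub by simp
  finally have "card ?R \<le> psize \<beta>" using N_eq by simp
  moreover have "card ?L = psize \<beta>" using T_des[OF T] by (simp add: des_def)
  moreover have fR: "finite ?R" using Rsub finite_subset by blast
  ultimately have "card ?L = card ?R" using card_mono[OF fR sub] by simp
  then show ?thesis using card_subset_eq[OF fR sub] by simp
qed

lemma T_chain:
  assumes T: "T \<in> tgt" and x: "x \<in> cells (k # conjugate \<beta>)"
  shows "y \<in> cells (k # conjugate \<beta>) \<Longrightarrow> T y = T x + Suc n \<Longrightarrow>
    (\<forall>m. T x \<le> m \<longrightarrow> m < T y \<longrightarrow> m \<in> descents (k # conjugate \<beta>) T) \<Longrightarrow> fst x < fst y"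
proof (induction n arbitrary: y)
  case 0
  have "T x \<in> descents (k # conjugate \<beta>) T" using 0 by simp
  then obtain i j i' j' where m:
      "(i, j) \<in> cells (k # conjugate \<beta>)" "T (i, j) = T x"
      "(i', j') \<in> cells (k # conjugate \<beta>)" "T (i', j') = T x + 1" "i < i'"
      unfolding descents_def by blast
  have "(i, j) = x" using T_inj[OF T m(1) x] m(2) by simp
  moreover have "(i', j') = y" using T_inj[OF T m(3) 0(1)] m(4) 0(2) by simp
  ultimately show ?case using m(5) by auto
next
  case (Suc n)
  let ?m = "T x + Suc n"
  have "?m \<in> descents (k # conjugate \<beta>) T" using Suc.prems by simp
  then obtain i j i' j' where m:
      "(i, j) \<in> cells (k # conjugate \<beta>)" "T (i, j) = ?m"
      "(i', j') \<in> cells (k # conjugate \<beta>)" "T (i', j') = ?m + 1" "i < i'"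
      unfolding descents_def by blast
  have "(i', j') = y" using T_inj[OF T m(3) Suc.prems(1)] m(4) Suc.prems(2) by simp
  moreover have "fst x < fst (i, j)"
    using Suc.IH[OF m(1) m(2)] Suc.prems(2,3) m(2) by simp
  ultimately show ?case using m(5) by auto
qed

end

context Setup begin

lemma rho_key:
  assumes T: "T \<in> tgt" and z: "z \<in> cells (k # conjugate \<beta>)"
  shows "key (Psi \<beta> k T) z = (card {c. c < k \<and> T (0, c) \<le> T z}, fst z)"
proof -
  obtain a b where ab: "z = (a, b)" by fastforce
  show ?thesis
  proof (cases a)
    case 0
    then have bk: "b < k" using z ab cells_lam_0 by simp
    have "{c. c < k \<and> T (0, c) \<le> T (0, b)} = {..b}"
    proof (rule set_eqI)
      fix c
      show "c \<in> {c. c < k \<and> T (0, c) \<le> T (0, b)} \<longleftrightarrow> c \<in> {..b}"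
        using T_row0[OF T, of b c] T_row0[OF T, of c b] bk
        by (cases c b rule: linorder_cases) auto
    qed
    then show ?thesis using ab 0 by simp
  next
    case (Suc s)
    then have bs: "(b, s) \<in> cells \<beta>" using z ab cells_lam_Suc by simp
    have "{c. c < k \<and> T (0, c) < T (Suc s, b)} = {c. c < k \<and> T (0, c) \<le> T (Suc s, b)}"
    proof (rule set_eqI)
      fix c
      have "c < k \<Longrightarrow> T (0, c) \<noteq> T (Suc s, b)"
        using T_inj[OF T _ z] ab Suc cells_lam_0[of c] by fastforce
      then show "c \<in> {c. c < k \<and> T (0, c) < T (Suc s, b)} \<longleftrightarrow> c \<in> {c. c < k \<and> T (0, c) \<le> T (Suc s, b)}"
        by auto
    qed
    then show ?thesis using ab Suc bs by (simp add: Psi_def)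
  qed
qed

lemma keymono:
  assumes T: "T \<in> tgt" and x: "x \<in> cells (k # conjugate \<beta>)" and y: "y \<in> cells (k # conjugate \<beta>)"
    and lt: "T x < T y"
  shows "key (Psi \<beta> k T) x < key (Psi \<beta> k T) y"
proof -
  let ?A = "\<lambda>z. {c. c < k \<and> T (0, c) \<le> T z}"
  have sub: "?A x \<subseteq> ?A y" using lt by auto
  have fin: "finite (?A y)" by (rule finite_subset[of _ "{..<k}"]) auto
  have le: "card (?A x) \<le> card (?A y)" using card_mono[OF fin sub] .
  show ?thesis
  proof (cases "card (?A x) < card (?A y)")
    case True then show ?thesis using rho_key[OF T x] rho_key[OF T y] by (simp add: less_prod_def)
  next
    case False
    then have "card (?A x) = card (?A y)" using le by simp
    then have eqA: "?A x = ?A y" using card_subset_eq[OF fin sub] by simp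
    have desc: "\<forall>m. T x \<le> m \<longrightarrow> m < T y \<longrightarrow> m \<in> descents (k # conjugate \<beta>) T"
    proof (intro allI impI)
      fix m assume m: "T x \<le> m" "m < T y"
      have "m + 1 \<notin> T ` R0 k"
      proof
        assume "m + 1 \<in> T ` R0 k"
        then obtain c where c: "c < k" "T (0, c) = m + 1" by (auto simp: R0_def)
        then have "c \<in> ?A y" using m by simp
        then have "c \<in> ?A x" using eqA by simp
        then show False using c m by simp
      qed
      moreover have "1 \<le> m" using T_range[OF T x] m by simp
      moreover have "m < sum_list (k # conjugate \<beta>)" using T_range[OF T y] m by simp
      ultimately show "m \<in> descents (k # conjugate \<beta>) T" using T_desc[OF T] by simp
    qed
    have "T y = T x + Suc (T y - T x - 1)" using lt by simp
    then have "fst x < fst y" using T_chain[OF T x y _ desc] by blast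
    then show ?thesis using rho_key[OF T x] rho_key[OF T y] eqA by (simp add: less_prod_def)
  qed
qed

lemma Psi_SSYT: assumes T: "T \<in> tgt" shows "Psi \<beta> k T \<in> SSYT \<beta> k"
  unfolding SSYT_def
proof (intro CollectI conjI allI impI ballI)
  fix w assume w: "w \<in> cells \<beta>"
  obtain i r where ir: "w = (i, r)" by fastforce
  have "i < k" using B_lt_k w ir by simp
  moreover have "T (0, i) < T (Suc r, i)" using T_colchain[OF T] w ir by simp
  ultimately have "i \<in> {c. c < k \<and> T (0, c) < T (Suc r, i)}" by simp
  moreover have fin: "finite {c. c < k \<and> T (0, c) < T (Suc r, i)}" by simp
  ultimately have "1 \<le> card {c. c < k \<and> T (0, c) < T (Suc r, i)}"
    by (metis One_nat_def Suc_leI card_gt_0_iff empty_iff)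
  moreover have "card {c. c < k \<and> T (0, c) < T (Suc r, i)} \<le> k"
    using card_mono[of "{..<k}" "{c. c < k \<and> T (0, c) < T (Suc r, i)}"] by auto
  ultimately show "Psi \<beta> k T w \<in> {1..k}" using w ir by (simp add: Psi_def)
next
  fix i j assume a: "(i, j + 1) \<in> cells \<beta>"
  have c1: "(Suc j, i) \<in> cells (k # conjugate \<beta>)" using B_down_row[OF a, of j] cells_lam_Suc by simp
  have c2: "(Suc j + 1, i) \<in> cells (k # conjugate \<beta>)" using a cells_lam_Suc by simp
  have "T (Suc j, i) < T (Suc j + 1, i)" using T_col[OF T c2] .
  then have "key (Psi \<beta> k T) (Suc j, i) < key (Psi \<beta> k T) (Suc j + 1, i)" using keymono[OF T c1 c2] by simp
  then show "Psi \<beta> k T (i, j) \<le> Psi \<beta> k T (i, j + 1)" by (auto simp: less_prod_def)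
next
  fix i j assume a: "(i + 1, j) \<in> cells \<beta>"
  have c1: "(Suc j, i) \<in> cells (k # conjugate \<beta>)" using B_down_col[OF a, of i] cells_lam_Suc by simp
  have c2: "(Suc j, i + 1) \<in> cells (k # conjugate \<beta>)" using a cells_lam_Suc by simp
  have "T (Suc j, i) < T (Suc j, i + 1)" using T_row[OF T c2] .
  then have "key (Psi \<beta> k T) (Suc j, i) < key (Psi \<beta> k T) (Suc j, i + 1)" using keymono[OF T c1 c2] by simp
  then show "Psi \<beta> k T (i, j) < Psi \<beta> k T (i + 1, j)" by (simp add: less_prod_def)
next
  fix c assume "c \<notin> cells \<beta>" then show "Psi \<beta> k T c = 0" by (simp add: Psi_def)
qed

lemma Phi_Psi: assumes T: "T \<in> tgt" shows "Phi \<beta> k (Psi \<beta> k T) = T"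
proof
  fix x
  let ?X = "cells (k # conjugate \<beta>)"
  show "Phi \<beta> k (Psi \<beta> k T) x = T x"
  proof (cases "x \<in> ?X")
    case False then show ?thesis using T_zero[OF T False] by (simp add: Phi_def)
  next
    case True
    have eq: "{y\<in>?X. key (Psi \<beta> k T) y < key (Psi \<beta> k T) x} = {y\<in>?X. T y < T x}"
    proof (rule set_eqI)
      fix y
      show "y \<in> {y\<in>?X. key (Psi \<beta> k T) y < key (Psi \<beta> k T) x} \<longleftrightarrow> y \<in> {y\<in>?X. T y < T x}"
      proof (cases "y \<in> ?X")
        case yX: True
        have "T y < T x \<or> T y = T x \<or> T x < T y" by auto
        then show ?thesis
        proof (elim disjE)
          assume "T y < T x" then show ?thesis using keymono[OF T yX True] yX by simp
        next
          assume "T y = T x" then have "y = x" using T_inj[OF T yX True] by simp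
          then show ?thesis by simp
        next
          assume "T x < T y"
          then have "key (Psi \<beta> k T) x < key (Psi \<beta> k T) y" using keymono[OF T True yX] by simp
          then show ?thesis using \<open>T x < T y\<close> by auto
        qed
      qed simp
    qed
    have "T ` {y\<in>?X. T y < T x} = {1..<T x}"
    proof
      show "T ` {y\<in>?X. T y < T x} \<subseteq> {1..<T x}" using T_range[OF T] by fastforce
      show "{1..<T x} \<subseteq> T ` {y\<in>?X. T y < T x}"
      proof
        fix v assume v: "v \<in> {1..<T x}"
        then obtain y where "y \<in> ?X" "T y = v" using T_surj[OF T, of v] T_range[OF T True] by auto
        then show "v \<in> T ` {y\<in>?X. T y < T x}" using v by auto
      qed
    qed
    moreover have "inj_on T {y\<in>?X. T y < T x}" using T_inj[OF T] by (auto simp: inj_on_def)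
    ultimately have "card {y\<in>?X. T y < T x} = T x - 1" using card_image by fastforce
    then show ?thesis using True eq T_range[OF T True] by (simp add: Phi_def)
  qed
qed

end

context Setup begin

lemma f_des_eq:
  fixes q :: "'a::field"
  shows "f_des (k # conjugate \<beta>) (psize \<beta>) q = q ^ (psize \<beta> + 1 choose 2) * schur \<beta> k (\<lambda>i. q ^ (i - 1))"
proof -
  have "f_des (k # conjugate \<beta>) (psize \<beta>) q = (\<Sum>T\<in>tgt. q ^ maj (k # conjugate \<beta>) T)"
    by (simp add: f_des_def tgt_def)
  also have "\<dots> = (\<Sum>P\<in>SSYT \<beta> k. q ^ maj (k # conjugate \<beta>) (Phi \<beta> k P))"
  proof (rule sum.reindex_bij_witness[symmetric, where i = "Psi \<beta> k" and j = "Phi \<beta> k"])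
    fix P assume P: "P \<in> SSYT \<beta> k"
    show "Psi \<beta> k (Phi \<beta> k P) = P" by (rule Psi_Phi[OF P])
    show "Phi \<beta> k P \<in> tgt" using Phi_SYT[OF P] Phi_des_maj(1)[OF P] by (simp add: tgt_def)
    show "q ^ maj (k # conjugate \<beta>) (Phi \<beta> k P) = q ^ maj (k # conjugate \<beta>) (Phi \<beta> k P)" by simp
  next
    fix T assume T: "T \<in> tgt"
    show "Phi \<beta> k (Psi \<beta> k T) = T" by (rule Phi_Psi[OF T])
    show "Psi \<beta> k T \<in> SSYT \<beta> k" by (rule Psi_SSYT[OF T])
  qed
  also have "\<dots> = (\<Sum>P\<in>SSYT \<beta> k. q ^ (psize \<beta> + 1 choose 2) * (\<Prod>c\<in>cells \<beta>. q ^ (P c - 1)))"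
  proof (rule sum.cong)
    fix P assume P: "P \<in> SSYT \<beta> k"
    show "q ^ maj (k # conjugate \<beta>) (Phi \<beta> k P) = q ^ (psize \<beta> + 1 choose 2) * (\<Prod>c\<in>cells \<beta>. q ^ (P c - 1))"
      unfolding Phi_des_maj(2)[OF P] power_add power_sum by simp
  qed simp
  also have "\<dots> = q ^ (psize \<beta> + 1 choose 2) * schur \<beta> k (\<lambda>i. q ^ (i - 1))"
    by (simp add: schur_def sum_distrib_left)
  finally show ?thesis .
qed

end

theorem mainTheorem7:
  fixes \<beta> :: "nat list" and k :: nat and q :: "'a::field"
  assumes "is_partition \<beta>"
    and "length \<beta> \<le> k"
    and "q \<noteq> 0"
  shows "schur \<beta> k (\<lambda>i. q ^ (i - 1))
         = inverse (q ^ ((psize \<beta> + 1) choose 2)) * f_des (k # conjugate \<beta>) (psize \<beta>) q"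
proof -
  interpret Setup \<beta> k using assms(1,2) by unfold_locales
  have "q ^ ((psize \<beta> + 1) choose 2) \<noteq> 0" using assms(3) by simp
  then show ?thesis unfolding f_des_eq by (simp add: field_simps)
qed

end
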